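(* Let $d\ge 2$ be an integer and $\theta>0$. There is no tournament of Type (1) with $n=2d$ vertices whose Seidel matrix has spectrum $\{(-\theta)^{d-1},0^{2},\theta^{d-1}\}$ (exponents denote multiplicities).
   Context: A tournament on vertex set $V$ is an orientation of the complete graph on $V$; its adjacency matrix $A$ has $A_{xy}=1$ if $x\to y$ and $0$ otherwise, and its Seidel matrix is $S=\sqrt{-1}(A-A^T)$. Let $\tau_1<\cdots<\tau_s$ be the distinct eigenvalues of $S$ with multiplicities $m_i$, and main angles $\beta_i=\frac1{\sqrt n}\|E_ij\|$, where $E_i$ is the orthogonal projection onto the $\tau_i$-eigenspace and $j$ the all-ones vector. The tournament is of Type (1) if $\beta_1=0$; of Type (2) if $\beta_1\neq0$ and $m_1>1$; of Type (3) if $m_1=1$, $\beta_2=0$ and $c_2<0$, where $c_2=n\beta_1^2/(\tau_1-\tau_2)+\sum_{i=3}^s n\beta_i^2/(\tau_i-\tau_2)$; and of Type (4) otherwise. *)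

theory Defs
  imports "Jordan_Normal_Form.Char_Poly" "HOL-Computational_Algebra.Polynomial"
begin

definition tournament :: "nat \<Rightarrow> (nat \<Rightarrow> nat \<Rightarrow> bool) \<Rightarrow> bool" where
  "tournament n T \<longleftrightarrow> (\<forall>x<n. \<not> T x x) \<and>
     (\<forall>x<n. \<forall>y<n. x \<noteq> y \<longrightarrow> (T x y \<longleftrightarrow> \<not> T y x))"

definition adj_mat :: "nat \<Rightarrow> (nat \<Rightarrow> nat \<Rightarrow> bool) \<Rightarrow> complex mat" where
  "adj_mat n T = mat n n (\<lambda>(x, y). if T x y then 1 else 0)"

definition seidel_mat :: "nat \<Rightarrow> (nat \<Rightarrow> nat \<Rightarrow> bool) \<Rightarrow> complex mat" where
  "seidel_mat n T = \<i> \<cdot>\<^sub>m (adj_mat n T - transpose_mat (adj_mat n T))"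

definition eigenspace :: "complex mat \<Rightarrow> real \<Rightarrow> complex vec set" where
  "eigenspace S t = {v \<in> carrier_vec (dim_row S). S *\<^sub>v v = complex_of_real t \<cdot>\<^sub>v v}"

definition eig_proj :: "complex mat \<Rightarrow> real \<Rightarrow> complex vec \<Rightarrow> complex vec" where
  "eig_proj S t v = (THE w. w \<in> eigenspace S t \<and>
      (\<forall>u \<in> eigenspace S t. (\<Sum>i<dim_row S. (v $ i - w $ i) * cnj (u $ i)) = 0))"

definition vnorm :: "complex vec \<Rightarrow> real" where
  "vnorm v = sqrt (\<Sum>i<dim_vec v. (cmod (v $ i))\<^sup>2)"

definition main_angle :: "complex mat \<Rightarrow> real \<Rightarrow> real" where
  "main_angle S t = vnorm (eig_proj S t (vec (dim_row S) (\<lambda>_. 1))) / sqrt (real (dim_row S))"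

text \<open>Smallest eigenvalue tau_1 (eigenvalues of Seidel matrices are real).\<close>
definition smallest_eig :: "complex mat \<Rightarrow> real" where
  "smallest_eig S = Min {t :: real. eigenvalue S (complex_of_real t)}"

definition tournament_type1 :: "nat \<Rightarrow> (nat \<Rightarrow> nat \<Rightarrow> bool) \<Rightarrow> bool" where
  "tournament_type1 n T \<longleftrightarrow>
     main_angle (seidel_mat n T) (smallest_eig (seidel_mat n T)) = 0"

end

theory Submission imports Defs "Jordan_Normal_Form.Schur_Decomposition" begin

lemma ut_mult_entry:
  fixes A B :: "'a::comm_ring_1 mat"
  assumes A: "A \<in> carrier_mat n n" and B: "B \<in> carrier_mat n n"
    and uA: "\<And>i j. i < n \<Longrightarrow> j < i \<Longrightarrow> A $$ (i,j) = 0"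
    and uB: "\<And>i j. i < n \<Longrightarrow> j < i \<Longrightarrow> B $$ (i,j) = 0"
    and i: "i < n" and ji: "j \<le> i"
  shows "(A * B) $$ (i,j) = A $$ (i,i) * B $$ (i,j)"
proof -
  have jn: "j < n" using i ji by simp
  have "(A * B) $$ (i,j) = (\<Sum>l<n. A $$ (i,l) * B $$ (l,j))"
    using A B i jn by (simp add: scalar_prod_def lessThan_atLeast0)
  also have "\<dots> = (\<Sum>l<n. if l = i then A $$ (i,i) * B $$ (i,j) else 0)"
  proof (rule sum.cong[OF refl])
    fix l assume l: "l \<in> {..<n}"
    show "A $$ (i,l) * B $$ (l,j) = (if l = i then A $$ (i,i) * B $$ (i,j) else 0)"
    proof (cases "l < i")
      case True then show ?thesis using uA[OF i True] by simp
    next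
      case False
      show ?thesis
      proof (cases "l = i")
        case False2: False
        with \<open>\<not> l < i\<close> have "j < l" using ji by simp
        then show ?thesis using uB[of l j] l False2 by simp
      qed simp
    qed
  qed
  also have "\<dots> = A $$ (i,i) * B $$ (i,j)" using i by simp
  finally show ?thesis .
qed

lemma strict_pow_zero:
  fixes N :: "'a::comm_ring_1 mat"
  assumes N: "N \<in> carrier_mat n n"
    and sN: "\<And>l j. l < n \<Longrightarrow> j \<le> l \<Longrightarrow> N $$ (l,j) = 0"
  shows "i < n \<Longrightarrow> j < n \<Longrightarrow> j < i + k \<Longrightarrow> (N ^\<^sub>m k) $$ (i,j) = 0"
proof (induction k arbitrary: i j)
  case 0 then show ?case using N by simp
next
  case (Suc k)
  have "(N ^\<^sub>m Suc k) $$ (i,j) = (\<Sum>l<n. (N ^\<^sub>m k) $$ (i,l) * N $$ (l,j))"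
    using N Suc.prems by (simp add: scalar_prod_def lessThan_atLeast0)
  also have "\<dots> = 0"
  proof (rule sum.neutral, intro ballI)
    fix l assume l: "l \<in> {..<n}"
    show "(N ^\<^sub>m k) $$ (i,l) * N $$ (l,j) = 0"
    proof (cases "l < i + k")
      case True then show ?thesis using Suc.IH[of i l] Suc.prems l by simp
    next
      case False then show ?thesis using sN[of l j] Suc.prems l by simp
    qed
  qed
  finally show ?case .
qed

lemma strict_nilpotent:
  fixes N :: "'a::comm_ring_1 mat"
  assumes N: "N \<in> carrier_mat n n"
    and sN: "\<And>l j. l < n \<Longrightarrow> j \<le> l \<Longrightarrow> N $$ (l,j) = 0"
  shows "N ^\<^sub>m n = 0\<^sub>m n n"
  by (rule eq_matI, insert strict_pow_zero[OF N sN] N, auto)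

lemma pow_mat_add:
  fixes A :: "'a::semiring_1 mat"
  assumes A: "A \<in> carrier_mat n n"
  shows "A ^\<^sub>m (a + b) = A ^\<^sub>m a * A ^\<^sub>m b"
proof (induction b)
  case 0 then show ?case using A by simp
next
  case (Suc b)
  then show ?case using A by (simp add: assoc_mult_mat[of _ n n _ n _ n])
qed

lemma pow_mat_comm:
  fixes A :: "'a::semiring_1 mat"
  assumes A: "A \<in> carrier_mat n n"
  shows "A * A ^\<^sub>m k = A ^\<^sub>m k * A"
  using pow_mat_add[OF A, of 1 k] pow_mat_add[OF A, of k 1] A by (simp add: add.commute)

definition sa :: "complex mat \<Rightarrow> nat \<Rightarrow> bool" where
  "sa A n \<longleftrightarrow> A \<in> carrier_mat n n \<and>
     (\<forall>x\<in>carrier_vec n. \<forall>y\<in>carrier_vec n. (A *\<^sub>v x) \<bullet>c y = x \<bullet>c (A *\<^sub>v y))"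

lemma herm_sa:
  assumes A: "A \<in> carrier_mat n n"
    and h: "\<And>i j. i < n \<Longrightarrow> j < n \<Longrightarrow> A $$ (i,j) = cnj (A $$ (j,i))"
  shows "sa A n"
  unfolding sa_def
proof (intro conjI ballI A)
  fix x y :: "complex vec" assume x: "x \<in> carrier_vec n" and y: "y \<in> carrier_vec n"
  have "(A *\<^sub>v x) \<bullet>c y = (\<Sum>i<n. (\<Sum>j<n. A $$ (i,j) * x $ j) * cnj (y $ i))"
    using A x y by (simp add: scalar_prod_def lessThan_atLeast0)
  also have "\<dots> = (\<Sum>i<n. \<Sum>j<n. A $$ (i,j) * x $ j * cnj (y $ i))"
    by (simp add: sum_distrib_right)
  also have "\<dots> = (\<Sum>j<n. \<Sum>i<n. A $$ (i,j) * x $ j * cnj (y $ i))"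
    by (rule sum.swap)
  also have "\<dots> = (\<Sum>j<n. x $ j * cnj (\<Sum>i<n. A $$ (j,i) * y $ i))"
  proof (rule sum.cong[OF refl])
    fix j assume j: "j \<in> {..<n}"
    have "x $ j * cnj (\<Sum>i<n. A $$ (j,i) * y $ i) = (\<Sum>i<n. x $ j * (cnj (A $$ (j,i)) * cnj (y $ i)))"
      by (simp only: cnj_sum complex_cnj_mult sum_distrib_left)
    also have "\<dots> = (\<Sum>i<n. A $$ (i,j) * x $ j * cnj (y $ i))"
    proof (rule sum.cong[OF refl])
      fix i assume i: "i \<in> {..<n}"
      show "x $ j * (cnj (A $$ (j,i)) * cnj (y $ i)) = A $$ (i,j) * x $ j * cnj (y $ i)"
        using h[of i j] i j by simp
    qed
    finally show "(\<Sum>i<n. A $$ (i,j) * x $ j * cnj (y $ i)) = x $ j * cnj (\<Sum>i<n. A $$ (j,i) * y $ i)" by simp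
  qed
  also have "\<dots> = x \<bullet>c (A *\<^sub>v y)"
    using A x y by (simp add: scalar_prod_def lessThan_atLeast0)
  finally show "(A *\<^sub>v x) \<bullet>c y = x \<bullet>c (A *\<^sub>v y)" .
qed

lemma sa_pow:
  assumes "sa A n" shows "sa (A ^\<^sub>m k) n"
proof (induction k)
  case 0 then show ?case using assms unfolding sa_def by auto
next
  case (Suc k)
  have A: "A \<in> carrier_mat n n" using assms sa_def by auto
  show ?case unfolding sa_def
  proof (intro conjI ballI)
    show "A ^\<^sub>m Suc k \<in> carrier_mat n n" using A pow_carrier_mat by blast
    fix x y :: "complex vec" assume x: "x \<in> carrier_vec n" and y: "y \<in> carrier_vec n"
    have "(A ^\<^sub>m Suc k *\<^sub>v x) \<bullet>c y = (A ^\<^sub>m k *\<^sub>v (A *\<^sub>v x)) \<bullet>c y"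
      using assoc_mult_mat_vec[OF pow_carrier_mat[OF A, of k] A x] by simp
    also have "\<dots> = (A *\<^sub>v x) \<bullet>c (A ^\<^sub>m k *\<^sub>v y)"
      using Suc.IH x y A unfolding sa_def by simp
    also have "\<dots> = x \<bullet>c (A *\<^sub>v (A ^\<^sub>m k *\<^sub>v y))"
      using assms x A mult_mat_vec_carrier[OF pow_carrier_mat[OF A, of k] y] unfolding sa_def by blast
    also have "A *\<^sub>v (A ^\<^sub>m k *\<^sub>v y) = (A * A ^\<^sub>m k) *\<^sub>v y"
      using assoc_mult_mat_vec[OF A pow_carrier_mat[OF A] y, symmetric] by simp
    also have "A * A ^\<^sub>m k = A ^\<^sub>m Suc k"
      using pow_mat_comm[OF A, of k] by simp
    finally show "(A ^\<^sub>m Suc k *\<^sub>v x) \<bullet>c y = x \<bullet>c (A ^\<^sub>m Suc k *\<^sub>v y)" .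
  qed
qed

lemma mv_index: "A \<in> carrier_mat n n \<Longrightarrow> x \<in> carrier_vec n \<Longrightarrow> i < n \<Longrightarrow>
  (A *\<^sub>v x) $ i = (\<Sum>j<n. A $$ (i,j) * x $ j)"
  by (simp add: scalar_prod_def lessThan_atLeast0)

lemma cprod_sum: "x \<in> carrier_vec n \<Longrightarrow> y \<in> carrier_vec n \<Longrightarrow>
  x \<bullet>c y = (\<Sum>i<n. x $ i * cnj (y $ i))"
  by (simp add: scalar_prod_def lessThan_atLeast0)

lemma sa_lincomb:
  assumes "sa A n" "sa B n"
  shows "sa (A - complex_of_real c \<cdot>\<^sub>m B) n"
  unfolding sa_def
proof (intro conjI ballI)
  have A: "A \<in> carrier_mat n n" and B: "B \<in> carrier_mat n n" using assms sa_def by auto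
  have C: "A - complex_of_real c \<cdot>\<^sub>m B \<in> carrier_mat n n" using A B by (intro minus_carrier_mat smult_carrier_mat)
  then show "A - complex_of_real c \<cdot>\<^sub>m B \<in> carrier_mat n n" .
  fix x y :: "complex vec" assume x: "x \<in> carrier_vec n" and y: "y \<in> carrier_vec n"
  have e: "\<And>v. v \<in> carrier_vec n \<Longrightarrow> (A - complex_of_real c \<cdot>\<^sub>m B) *\<^sub>v v = A *\<^sub>v v - complex_of_real c \<cdot>\<^sub>v (B *\<^sub>v v)"
  proof (rule eq_vecI)
    fix v :: "complex vec" and i assume v: "v \<in> carrier_vec n"
    assume "i < dim_vec (A *\<^sub>v v - complex_of_real c \<cdot>\<^sub>v (B *\<^sub>v v))"
    then have i: "i < n" using A B by auto
    show "((A - complex_of_real c \<cdot>\<^sub>m B) *\<^sub>v v) $ i = (A *\<^sub>v v - complex_of_real c \<cdot>\<^sub>v (B *\<^sub>v v)) $ i"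
      using A B i v by (simp add: mv_index[OF C v i] mv_index[OF A v i] mv_index[OF B v i] mv_index[OF smult_carrier_mat[OF B] v i] sum_subtractf sum_distrib_left algebra_simps del: index_mult_mat_vec)
  qed (use A B in simp)
  have Ax: "A *\<^sub>v x \<in> carrier_vec n" "B *\<^sub>v x \<in> carrier_vec n" "A *\<^sub>v y \<in> carrier_vec n" "B *\<^sub>v y \<in> carrier_vec n"
    using A B x y by auto
  have "((A - complex_of_real c \<cdot>\<^sub>m B) *\<^sub>v x) \<bullet>c y = (A *\<^sub>v x) \<bullet>c y - complex_of_real c * ((B *\<^sub>v x) \<bullet>c y)"
    unfolding e[OF x] using Ax x y
    by (simp add: minus_scalar_prod_distrib[of _ n])
  also have "\<dots> = x \<bullet>c (A *\<^sub>v y) - complex_of_real c * (x \<bullet>c (B *\<^sub>v y))"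
    using assms x y unfolding sa_def by simp
  also have "\<dots> = x \<bullet>c ((A - complex_of_real c \<cdot>\<^sub>m B) *\<^sub>v y)"
  proof -
    have cj: "conjugate (A *\<^sub>v y - complex_of_real c \<cdot>\<^sub>v (B *\<^sub>v y)) = conjugate (A *\<^sub>v y) - complex_of_real c \<cdot>\<^sub>v conjugate (B *\<^sub>v y)"
      using Ax A B by (intro eq_vecI) auto
    show ?thesis unfolding e[OF y] cj using Ax x y
      by (simp add: scalar_prod_minus_distrib[of _ n])
  qed
  finally show "((A - complex_of_real c \<cdot>\<^sub>m B) *\<^sub>v x) \<bullet>c y = x \<bullet>c ((A - complex_of_real c \<cdot>\<^sub>m B) *\<^sub>v y)" .
qed


lemma sa_kill_down:
  assumes sa: "sa M n" and z: "\<forall>x\<in>carrier_vec n. M ^\<^sub>m Suc k *\<^sub>v x = 0\<^sub>v n" and k: "k \<ge> 1"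
  shows "\<forall>x\<in>carrier_vec n. M ^\<^sub>m k *\<^sub>v x = 0\<^sub>v n"
proof
  fix x :: "complex vec" assume x: "x \<in> carrier_vec n"
  have M: "M \<in> carrier_mat n n" using sa sa_def by auto
  have Mk: "M ^\<^sub>m k \<in> carrier_mat n n" using M by simp
  have y: "M ^\<^sub>m k *\<^sub>v x \<in> carrier_vec n" using Mk x by simp
  have "(M ^\<^sub>m k *\<^sub>v x) \<bullet>c (M ^\<^sub>m k *\<^sub>v x) = x \<bullet>c (M ^\<^sub>m k *\<^sub>v (M ^\<^sub>m k *\<^sub>v x))"
    using sa_pow[OF sa, of k] x y unfolding sa_def by blast
  also have "M ^\<^sub>m k *\<^sub>v (M ^\<^sub>m k *\<^sub>v x) = M ^\<^sub>m (k + k) *\<^sub>v x"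
    using pow_mat_add[OF M, of k k] Mk x by simp
  also have "k + k = Suc k + (k - 1)" using k by simp
  also have "M ^\<^sub>m (Suc k + (k - 1)) *\<^sub>v x = M ^\<^sub>m Suc k *\<^sub>v (M ^\<^sub>m (k - 1) *\<^sub>v x)"
    using pow_mat_add[OF M, of "Suc k" "k - 1"] assoc_mult_mat_vec[OF pow_carrier_mat[OF M, of "Suc k"] pow_carrier_mat[OF M, of "k - 1"] x]
    by (simp del: pow_mat.simps)
  also have "\<dots> = 0\<^sub>v n" using z mult_mat_vec_carrier[OF pow_carrier_mat[OF M, of "k - 1"] x] by blast
  finally have "(M ^\<^sub>m k *\<^sub>v x) \<bullet>c (M ^\<^sub>m k *\<^sub>v x) = 0" using x by simp
  then show "M ^\<^sub>m k *\<^sub>v x = 0\<^sub>v n" using y by simp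
qed

lemma sa_nilp_zero:
  assumes sa: "sa M n" and z: "M ^\<^sub>m n = 0\<^sub>m n n" and n: "n \<ge> 1"
  shows "\<forall>x\<in>carrier_vec n. M *\<^sub>v x = 0\<^sub>v n"
proof -
  have M: "M \<in> carrier_mat n n" using sa sa_def by auto
  have main: "\<forall>x\<in>carrier_vec n. M ^\<^sub>m (n - m) *\<^sub>v x = 0\<^sub>v n" if "m < n" for m
    using that
  proof (induction m)
    case 0 then show ?case using z by (auto intro!: eq_vecI)
  next
    case (Suc m)
    have e: "n - m = Suc (n - Suc m)" using Suc.prems by simp
    show ?case
      by (rule sa_kill_down[OF sa]) (use Suc e in auto)
  qed
  from main[of "n - 1"] n have "\<forall>x\<in>carrier_vec n. M ^\<^sub>m 1 *\<^sub>v x = 0\<^sub>v n" by simp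
  then show ?thesis using M by simp
qed

lemma cube_law:
  fixes S :: "complex mat" and th :: real
  assumes S: "S \<in> carrier_mat n n" and saS: "sa S n" and n: "n \<ge> 1"
    and cp: "char_poly S = (\<Prod>e\<leftarrow>es. [:- e, 1:])"
    and es: "\<And>e. e \<in> set es \<Longrightarrow> e = - complex_of_real th \<or> e = 0 \<or> e = complex_of_real th"
  shows "\<forall>x\<in>carrier_vec n. (S ^\<^sub>m 3 - complex_of_real (th^2) \<cdot>\<^sub>m S) *\<^sub>v x = 0\<^sub>v n"
proof -
  obtain B P Q where sd: "schur_decomposition S es = (B,P,Q)" by (cases "schur_decomposition S es") auto
  from schur_decomposition[OF S cp sd] have wit: "similar_mat_wit S B P Q" and ut: "upper_triangular B"
    and dg: "diag_mat B = es" by auto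
  from similar_mat_witD2[OF S wit] have B: "B \<in> carrier_mat n n" and P: "P \<in> carrier_mat n n"
    and Q: "Q \<in> carrier_mat n n" and QP: "Q * P = 1\<^sub>m n" and SB: "S = P * B * Q" by auto
  have uB: "\<And>i j. i < n \<Longrightarrow> j < i \<Longrightarrow> B $$ (i,j) = 0" using ut B by auto
  have dB: "\<And>i. i < n \<Longrightarrow> B $$ (i,i) = - complex_of_real th \<or> B $$ (i,i) = 0 \<or> B $$ (i,i) = complex_of_real th"
  proof -
    fix i assume i: "i < n"
    have "B $$ (i,i) \<in> set (diag_mat B)" using i B unfolding diag_mat_def by auto
    then show "B $$ (i,i) = - complex_of_real th \<or> B $$ (i,i) = 0 \<or> B $$ (i,i) = complex_of_real th"
      using es dg by auto
  qed
  define c where "c = complex_of_real (th^2)"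
  define N where "N = B ^\<^sub>m 3 - c \<cdot>\<^sub>m B"
  have B3: "B ^\<^sub>m 3 = B * B * B" using B by (simp add: numeral_3_eq_3)
  have BB: "B * B \<in> carrier_mat n n" using B by simp
  have e2: "\<And>i j. i < n \<Longrightarrow> j \<le> i \<Longrightarrow> (B * B) $$ (i,j) = B $$ (i,i) * B $$ (i,j)"
    by (rule ut_mult_entry[OF B B uB uB])
  have u2: "\<And>i j. i < n \<Longrightarrow> j < i \<Longrightarrow> (B * B) $$ (i,j) = 0" using e2 uB by simp
  have e3: "\<And>i j. i < n \<Longrightarrow> j \<le> i \<Longrightarrow> (B * B * B) $$ (i,j) = B $$ (i,i) * B $$ (i,i) * B $$ (i,j)"
    using ut_mult_entry[OF BB B u2 uB] e2 by simp
  have N: "N \<in> carrier_mat n n" unfolding N_def using B by (intro minus_carrier_mat smult_carrier_mat pow_carrier_mat)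
  have sN: "\<And>l j. l < n \<Longrightarrow> j \<le> l \<Longrightarrow> N $$ (l,j) = 0"
  proof -
    fix l j assume l: "l < n" and j: "j \<le> l"
    have "N $$ (l,j) = (B $$ (l,l) * B $$ (l,l) - c) * B $$ (l,j)"
      unfolding N_def B3 using l j B e3[OF l j] by (simp add: algebra_simps)
    also have "\<dots> = 0"
    proof (cases "j = l")
      case True
      then show ?thesis using dB[OF l] unfolding c_def by (auto simp: power2_eq_square)
    next
      case False then show ?thesis using uB[OF l] j by simp
    qed
    finally show "N $$ (l,j) = 0" .
  qed
  have Nn: "N ^\<^sub>m n = 0\<^sub>m n n" by (rule strict_nilpotent[OF N sN])
  define M where "M = S ^\<^sub>m 3 - c \<cdot>\<^sub>m S"
  have S3: "S ^\<^sub>m 3 = P * B ^\<^sub>m 3 * Q" by (rule similar_mat_wit_pow_id[OF wit])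
  have MPNQ: "M = P * N * Q"
  proof -
    have "P * N * Q = P * (B ^\<^sub>m 3) * Q - P * (c \<cdot>\<^sub>m B) * Q"
      unfolding N_def using P B Q
      by (simp add: mult_minus_distrib_mat[OF P pow_carrier_mat[OF B] smult_carrier_mat[OF B]]
        minus_mult_distrib_mat[OF mult_carrier_mat[OF P pow_carrier_mat[OF B]] mult_carrier_mat[OF P smult_carrier_mat[OF B]] Q])
    also have "P * (c \<cdot>\<^sub>m B) * Q = c \<cdot>\<^sub>m (P * B * Q)"
      using P B Q by (simp add: mult_smult_distrib[OF P B] mult_smult_assoc_mat[OF mult_carrier_mat[OF P B] Q])
    finally show ?thesis unfolding M_def S3 SB[symmetric] by simp
  qed
  have wit2: "similar_mat_wit M N P Q"
    by (rule similar_mat_witI, insert wit P Q N S MPNQ, auto simp: similar_mat_wit_def Let_def M_def)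
  have Mn: "M ^\<^sub>m n = 0\<^sub>m n n"
    using similar_mat_wit_pow_id[OF wit2, of n] Nn P Q by simp
  have saM: "sa M n" unfolding M_def c_def by (rule sa_lincomb[OF sa_pow[OF saS] saS])
  show ?thesis using sa_nilp_zero[OF saM Mn n] unfolding M_def c_def .
qed


definition cc :: "nat \<Rightarrow> (nat \<Rightarrow> nat \<Rightarrow> bool) \<Rightarrow> nat \<Rightarrow> int" where
  "cc n T k = (\<Sum>y<n. of_bool (T k y) - of_bool (T y k))"

lemma S_carrier: "seidel_mat n T \<in> carrier_mat n n"
  unfolding seidel_mat_def adj_mat_def by auto

lemma S_entry: "x < n \<Longrightarrow> y < n \<Longrightarrow>
  seidel_mat n T $$ (x,y) = \<i> * (of_bool (T x y) - of_bool (T y x))"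
  unfolding seidel_mat_def adj_mat_def by auto

lemma S_sa: "sa (seidel_mat n T) n"
  by (rule herm_sa[OF S_carrier]) (simp add: S_entry algebra_simps)

lemma Sj_entry:
  assumes i: "i < n"
  shows "(seidel_mat n T *\<^sub>v vec n (\<lambda>_. 1)) $ i = \<i> * of_int (cc n T i)"
proof -
  have "(seidel_mat n T *\<^sub>v vec n (\<lambda>_. 1)) $ i = (\<Sum>y<n. \<i> * (of_bool (T i y) - of_bool (T y i)))"
    unfolding mv_index[OF S_carrier vec_carrier i] by (rule sum.cong) (auto simp: S_entry i)
  also have "\<dots> = \<i> * of_int (cc n T i)"
    unfolding cc_def by (simp add: sum_distrib_left of_int_sum)
  finally show ?thesis .
qed

lemma cc_sum: "(\<Sum>k<n. cc n T k) = 0"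
proof -
  have "(\<Sum>k<n. cc n T k) = (\<Sum>k<n. \<Sum>y<n. of_bool (T k y)) - (\<Sum>k<n. \<Sum>y<n. (of_bool (T y k) :: int))"
    unfolding cc_def by (simp add: sum_subtractf)
  also have "(\<Sum>k<n. \<Sum>y<n. (of_bool (T y k) :: int)) = (\<Sum>k<n. \<Sum>y<n. of_bool (T k y))"
    by (rule sum.swap)
  finally show ?thesis by simp
qed

lemma cc_odd:
  assumes tour: "tournament n T" and k: "k < n" and ev: "even n"
  shows "odd (cc n T k)"
proof -
  have nk: "\<not> T k k" using tour k unfolding tournament_def by blast
  have "cc n T k = (\<Sum>y<n. (2 * of_bool (T k y) - 1) + (if y = k then 1 else 0))"
    unfolding cc_def
  proof (rule sum.cong[OF refl])
    fix y assume y: "y \<in> {..<n}"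
    have tt: "y \<noteq> k \<Longrightarrow> T y k \<longleftrightarrow> \<not> T k y" using tour k y unfolding tournament_def by blast
    show "(of_bool (T k y) - of_bool (T y k) :: int) = (2 * of_bool (T k y) - 1) + (if y = k then 1 else 0)"
      by (cases "y = k"; cases "T k y") (simp_all add: nk tt)
  qed
  also have "\<dots> = (\<Sum>y<n. (2 * of_bool (T k y) - 1)) + (\<Sum>y<n. (if y = k then 1 else 0))"
    by (rule sum.distrib)
  also have "(\<Sum>y<n. (if y = k then 1 else 0::int)) = 1" using k by simp
  also have "(\<Sum>y<n. (2 * of_bool (T k y) - 1::int)) = 2 * (\<Sum>y<n. of_bool (T k y)) - int n"
    by (simp add: sum_subtractf sum_distrib_left)
  finally have e: "cc n T k = 2 * (\<Sum>y<n. of_bool (T k y)) - int n + 1" .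
  from ev obtain m where "n = 2 * m" by blast
  then have "cc n T k = 2 * ((\<Sum>y<n. of_bool (T k y)) - int m) + 1" using e by simp
  then show ?thesis by simp
qed

lemma colsum_S:
  assumes k: "k < n"
  shows "(\<Sum>i<n. seidel_mat n T $$ (i,k)) = - (\<i> * of_int (cc n T k))"
proof -
  have "(\<Sum>i<n. seidel_mat n T $$ (i,k)) = (\<Sum>i<n. - (\<i> * (of_bool (T k i) - of_bool (T i k))))"
    by (rule sum.cong[OF refl]) (use k in \<open>simp add: S_entry algebra_simps\<close>)
  also have "\<dots> = - (\<i> * of_int (cc n T k))"
    unfolding cc_def by (simp add: sum_negf sum_distrib_left of_int_sum)
  finally show ?thesis .
qed

lemma key_contra:
  assumes tour: "tournament n T" and ev: "even n" and n: "n > 0"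
    and eq: "\<And>i. i < n \<Longrightarrow> (seidel_mat n T *\<^sub>v (seidel_mat n T *\<^sub>v vec n (\<lambda>_. 1))) $ i
          = complex_of_real th * (seidel_mat n T *\<^sub>v vec n (\<lambda>_. 1)) $ i"
  shows False
proof -
  let ?S = "seidel_mat n T"
  let ?sj = "?S *\<^sub>v vec n (\<lambda>_. 1)"
  have sjc: "?sj \<in> carrier_vec n" using mult_mat_vec_carrier[OF S_carrier vec_carrier] .
  have "(\<Sum>i<n. (?S *\<^sub>v ?sj) $ i) = (\<Sum>i<n. complex_of_real th * ?sj $ i)"
    using eq by simp
  also have "\<dots> = (\<Sum>i<n. complex_of_real th * \<i> * of_int (cc n T i))"
    by (rule sum.cong[OF refl]) (simp add: Sj_entry mult.assoc)
  also have "\<dots> = complex_of_real th * \<i> * of_int (\<Sum>k<n. cc n T k)"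
    by (simp only: sum_distrib_left[symmetric] of_int_sum)
  also have "\<dots> = 0" by (simp add: cc_sum)
  finally have z: "(\<Sum>i<n. (?S *\<^sub>v ?sj) $ i) = 0" .
  have "(\<Sum>i<n. (?S *\<^sub>v ?sj) $ i) = (\<Sum>i<n. \<Sum>k<n. ?S $$ (i,k) * ?sj $ k)"
    by (rule sum.cong[OF refl]) (simp add: mv_index[OF S_carrier sjc] del: index_mult_mat_vec)
  also have "\<dots> = (\<Sum>k<n. \<Sum>i<n. ?S $$ (i,k) * ?sj $ k)" by (rule sum.swap)
  also have "\<dots> = (\<Sum>k<n. (\<Sum>i<n. ?S $$ (i,k)) * ?sj $ k)" by (simp add: sum_distrib_right)
  also have "\<dots> = (\<Sum>k<n. of_int ((cc n T k)^2))"
  proof (rule sum.cong[OF refl])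
    fix k assume k: "k \<in> {..<n}"
    have "(\<Sum>i<n. ?S $$ (i,k)) * ?sj $ k = - (\<i> * of_int (cc n T k)) * (\<i> * of_int (cc n T k))"
      using k by (simp only: colsum_S Sj_entry lessThan_iff)
    also have "\<dots> = of_int ((cc n T k)^2)" by (simp add: power2_eq_square algebra_simps)
    finally show "(\<Sum>i<n. ?S $$ (i,k)) * ?sj $ k = of_int ((cc n T k)^2)" .
  qed
  also have "\<dots> = of_int (\<Sum>k<n. (cc n T k)^2)" by (simp only: of_int_sum)
  finally have "(\<Sum>k<n. (cc n T k)^2) = 0" using z by (metis of_int_eq_0_iff)
  then have "\<forall>k\<in>{..<n}. (cc n T k)^2 = 0" by (subst (asm) sum_nonneg_eq_0_iff) auto
  then have "cc n T 0 = 0" using n by simp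
  moreover have "odd (cc n T 0)" using cc_odd[OF tour n ev] .
  ultimately show False by simp
qed


lemma minus_smult_mv:
  fixes A B :: "complex mat"
  assumes A: "A \<in> carrier_mat n n" and B: "B \<in> carrier_mat n n" and v: "v \<in> carrier_vec n"
  shows "(A - c \<cdot>\<^sub>m B) *\<^sub>v v = A *\<^sub>v v - c \<cdot>\<^sub>v (B *\<^sub>v v)"
proof (rule eq_vecI)
  have C: "A - c \<cdot>\<^sub>m B \<in> carrier_mat n n" using A B by (intro minus_carrier_mat smult_carrier_mat)
  fix i assume "i < dim_vec (A *\<^sub>v v - c \<cdot>\<^sub>v (B *\<^sub>v v))"
  then have i: "i < n" using A B by auto
  show "((A - c \<cdot>\<^sub>m B) *\<^sub>v v) $ i = (A *\<^sub>v v - c \<cdot>\<^sub>v (B *\<^sub>v v)) $ i"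
    using A B i v by (simp add: mv_index[OF C v i] mv_index[OF A v i] mv_index[OF B v i] mv_index[OF smult_carrier_mat[OF B] v i] sum_subtractf sum_distrib_left algebra_simps del: index_mult_mat_vec)
qed (use A B in simp)

lemma cprod_smult_right:
  fixes x y :: "complex vec"
  assumes "x \<in> carrier_vec n" "y \<in> carrier_vec n"
  shows "x \<bullet>c (b \<cdot>\<^sub>v y) = cnj b * (x \<bullet>c y)"
  using assms by (simp add: conjugate_smult_vec[of b y])

lemma proj_eq:
  fixes S :: "complex mat" and th :: real
  assumes S: "S \<in> carrier_mat n n" and saS: "sa S n" and th: "th > 0" and x: "x \<in> carrier_vec n"
    and cube: "S *\<^sub>v (S *\<^sub>v (S *\<^sub>v x)) = complex_of_real (th^2) \<cdot>\<^sub>v (S *\<^sub>v x)"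
  shows "eig_proj S (-th) x = complex_of_real (1/(2*th^2)) \<cdot>\<^sub>v (S *\<^sub>v (S *\<^sub>v x) - complex_of_real th \<cdot>\<^sub>v (S *\<^sub>v x))"
proof -
  define a where "a = complex_of_real (1/(2*th^2))"
  define t where "t = complex_of_real th"
  define sx where "sx = S *\<^sub>v x"
  define s2 where "s2 = S *\<^sub>v sx"
  define w where "w = a \<cdot>\<^sub>v (s2 - t \<cdot>\<^sub>v sx)"
  have dS: "dim_row S = n" using S by simp
  have sxc: "sx \<in> carrier_vec n" unfolding sx_def using S x by simp
  have s2c: "s2 \<in> carrier_vec n" unfolding s2_def using S sxc by simp
  have wc: "w \<in> carrier_vec n" unfolding w_def using sxc s2c by simp
  have c3: "S *\<^sub>v s2 = t^2 \<cdot>\<^sub>v sx" using cube unfolding s2_def sx_def t_def by simp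
  have tnz: "t \<noteq> 0" using th unfolding t_def by simp
  have at: "a * t^2 = 1/2" unfolding a_def t_def using th by (simp add: power2_eq_square)
  have cnjt: "cnj t = t" unfolding t_def by simp
  have Sw: "S *\<^sub>v w = a \<cdot>\<^sub>v (t^2 \<cdot>\<^sub>v sx - t \<cdot>\<^sub>v s2)"
    unfolding w_def using S sxc s2c
    by (simp add: mult_mat_vec[OF S] mult_minus_distrib_mat_vec[OF S] c3 s2_def[symmetric])
  have Sw2: "S *\<^sub>v w = complex_of_real (- th) \<cdot>\<^sub>v w"
  proof -
    have "a \<cdot>\<^sub>v (t^2 \<cdot>\<^sub>v sx - t \<cdot>\<^sub>v s2) = (- t) \<cdot>\<^sub>v w"
      unfolding w_def using sxc s2c
      by (intro eq_vecI) (auto simp: algebra_simps power2_eq_square)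
    then show ?thesis using Sw unfolding t_def by simp
  qed
  have inE: "w \<in> eigenspace S (-th)" unfolding eigenspace_def using wc Sw2 dS by simp
  have orth: "(\<Sum>i<dim_row S. (x $ i - w $ i) * cnj (u $ i)) = 0" if u: "u \<in> eigenspace S (-th)" for u
  proof -
    have uc: "u \<in> carrier_vec n" and Su: "S *\<^sub>v u = (- t) \<cdot>\<^sub>v u"
      using u dS unfolding eigenspace_def t_def by auto
    have "(\<Sum>i<dim_row S. (x $ i - w $ i) * cnj (u $ i)) = (x - w) \<bullet>c u"
      using x wc uc dS by (simp add: cprod_sum[of _ n])
    also have "\<dots> = x \<bullet>c u - w \<bullet>c u" using x wc uc by (simp add: minus_scalar_prod_distrib[of _ n])
    also have "sx \<bullet>c u = - t * (x \<bullet>c u)"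
    proof -
      have "sx \<bullet>c u = x \<bullet>c (S *\<^sub>v u)" using saS x uc unfolding sa_def sx_def by blast
      also have "\<dots> = - t * (x \<bullet>c u)" unfolding Su using x uc cprod_smult_right[OF x uc] cnjt by simp
      finally show ?thesis .
    qed
    then have "s2 \<bullet>c u = t^2 * (x \<bullet>c u)"
    proof -
      assume h: "sx \<bullet>c u = - t * (x \<bullet>c u)"
      have "s2 \<bullet>c u = sx \<bullet>c (S *\<^sub>v u)" using saS sxc uc unfolding sa_def s2_def by blast
      also have "\<dots> = - t * (sx \<bullet>c u)" unfolding Su using sxc uc cprod_smult_right[OF sxc uc] cnjt by simp
      finally show ?thesis using h by (simp add: power2_eq_square)
    qed
    then have "w \<bullet>c u = x \<bullet>c u"
      using \<open>sx \<bullet>c u = - t * (x \<bullet>c u)\<close> sxc s2c uc at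
      unfolding w_def by (simp add: minus_scalar_prod_distrib[of _ n] algebra_simps power2_eq_square)
    finally show ?thesis by simp
  qed
  have uniq: "w' = w" if h: "w' \<in> eigenspace S (-th) \<and> (\<forall>u \<in> eigenspace S (-th). (\<Sum>i<dim_row S. (x $ i - w' $ i) * cnj (u $ i)) = 0)" for w'
  proof -
    have w'c: "w' \<in> carrier_vec n" and Sw': "S *\<^sub>v w' = complex_of_real (-th) \<cdot>\<^sub>v w'"
      using h dS unfolding eigenspace_def by auto
    define u where "u = w - w'"
    have uc: "u \<in> carrier_vec n" unfolding u_def using wc w'c by simp
    have "S *\<^sub>v u = complex_of_real (-th) \<cdot>\<^sub>v u"
      unfolding u_def mult_minus_distrib_mat_vec[OF S wc w'c] Sw2 Sw' using wc w'c
      by (intro eq_vecI) (auto simp: algebra_simps)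
    then have uE: "u \<in> eigenspace S (-th)" unfolding eigenspace_def using uc dS by simp
    have "(\<Sum>i<n. (x $ i - w' $ i) * cnj (u $ i)) - (\<Sum>i<n. (x $ i - w $ i) * cnj (u $ i)) = 0"
      using h uE orth[OF uE] dS by simp
    then have "(\<Sum>i<n. u $ i * cnj (u $ i)) = 0"
      unfolding u_def using wc w'c by (simp add: sum_subtractf[symmetric] algebra_simps)
    then have "u \<bullet>c u = 0" using uc by (simp add: cprod_sum[of _ n])
    then have "u = 0\<^sub>v n" using uc by simp
    then have "\<And>i. i < n \<Longrightarrow> w $ i - w' $ i = 0" unfolding u_def using wc w'c
      by (metis carrier_vecD index_minus_vec(1) index_zero_vec(1))
    then show "w' = w" using wc w'c by (intro eq_vecI) auto
  qed
  have "eig_proj S (-th) x = w"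
    unfolding eig_proj_def
    by (rule the_equality) (use inE orth uniq in blast)+
  then show ?thesis unfolding w_def a_def t_def sx_def s2_def .
qed


theorem lemma4p2:
  fixes d :: nat and \<theta> :: real
  assumes "d \<ge> 2" and "\<theta> > 0"
  shows "\<not> (\<exists>T. tournament (2 * d) T \<and> tournament_type1 (2 * d) T \<and>
            char_poly (seidel_mat (2 * d) T) =
              [:complex_of_real \<theta>, 1:] ^ (d - 1) * [:0, 1:] ^ 2 *
              [:- complex_of_real \<theta>, 1:] ^ (d - 1))"
proof
  assume "\<exists>T. tournament (2 * d) T \<and> tournament_type1 (2 * d) T \<and>
            char_poly (seidel_mat (2 * d) T) =
              [:complex_of_real \<theta>, 1:] ^ (d - 1) * [:0, 1:] ^ 2 *
              [:- complex_of_real \<theta>, 1:] ^ (d - 1)"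
  then obtain T where tour0: "tournament (2 * d) T" and t10: "tournament_type1 (2 * d) T"
    and cp0: "char_poly (seidel_mat (2 * d) T) =
              [:complex_of_real \<theta>, 1:] ^ (d - 1) * [:0, 1:] ^ 2 *
              [:- complex_of_real \<theta>, 1:] ^ (d - 1)" by blast
  define n where "n = 2 * d"
  define S where "S = seidel_mat n T"
  define t where "t = complex_of_real \<theta>"
  have th: "\<theta> > 0" using assms by simp
  have tour: "tournament n T" using tour0 unfolding n_def .
  have t1: "tournament_type1 n T" using t10 unfolding n_def .
  have cp: "char_poly S = [:t, 1:] ^ (d - 1) * [:0, 1:] ^ 2 * [:- t, 1:] ^ (d - 1)"
    using cp0 unfolding S_def n_def t_def .
  have n1: "n \<ge> 1" and n0: "n > 0" and evn: "even n" using assms unfolding n_def by auto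
  have S: "S \<in> carrier_mat n n" unfolding S_def by (rule S_carrier)
  have saS: "sa S n" unfolding S_def by (rule S_sa)
  have dS: "dim_row S = n" using S by simp
  define es where "es = replicate (d - 1) (- t) @ replicate 2 0 @ replicate (d - 1) t"
  have cpes: "char_poly S = (\<Prod>e\<leftarrow>es. [:- e, 1:])"
    unfolding cp es_def by (simp add: mult.assoc)
  have esm: "\<And>e. e \<in> set es \<Longrightarrow> e = - complex_of_real \<theta> \<or> e = 0 \<or> e = complex_of_real \<theta>"
    unfolding es_def t_def by (auto split: if_splits)
  have law: "\<forall>x\<in>carrier_vec n. (S ^\<^sub>m 3 - complex_of_real (\<theta>^2) \<cdot>\<^sub>m S) *\<^sub>v x = 0\<^sub>v n"
    by (rule cube_law[OF S saS n1 cpes esm])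
  define j where "j = vec n (\<lambda>_. 1 :: complex)"
  have jc: "j \<in> carrier_vec n" unfolding j_def by simp
  have S3: "S ^\<^sub>m 3 = S * S * S" using S by (simp add: numeral_3_eq_3)
  have S3j: "S ^\<^sub>m 3 *\<^sub>v j = S *\<^sub>v (S *\<^sub>v (S *\<^sub>v j))"
    unfolding S3 assoc_mult_mat_vec[OF mult_carrier_mat[OF S S] S jc]
    by (rule assoc_mult_mat_vec[OF S S mult_mat_vec_carrier[OF S jc]])
  have "S ^\<^sub>m 3 *\<^sub>v j - complex_of_real (\<theta>^2) \<cdot>\<^sub>v (S *\<^sub>v j) = 0\<^sub>v n"
    by (metis bspec[OF law jc] minus_smult_mv[OF pow_carrier_mat[OF S, of 3] S jc])
  then have dd: "\<And>i. i < n \<Longrightarrow> (S ^\<^sub>m 3 *\<^sub>v j) $ i - complex_of_real (\<theta>^2) * (S *\<^sub>v j) $ i = 0"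
  proof -
    fix i assume i: "i < n"
    assume h: "S ^\<^sub>m 3 *\<^sub>v j - complex_of_real (\<theta>^2) \<cdot>\<^sub>v (S *\<^sub>v j) = 0\<^sub>v n"
    have "(S ^\<^sub>m 3 *\<^sub>v j - complex_of_real (\<theta>^2) \<cdot>\<^sub>v (S *\<^sub>v j)) $ i = 0\<^sub>v n $ i" unfolding h ..
    then show "(S ^\<^sub>m 3 *\<^sub>v j) $ i - complex_of_real (\<theta>^2) * (S *\<^sub>v j) $ i = 0"
      using i S by simp
  qed
  have cube: "S *\<^sub>v (S *\<^sub>v (S *\<^sub>v j)) = complex_of_real (\<theta>^2) \<cdot>\<^sub>v (S *\<^sub>v j)"
    unfolding S3j[symmetric]
  proof (rule eq_vecI)
    fix i assume "i < dim_vec (complex_of_real (\<theta>^2) \<cdot>\<^sub>v (S *\<^sub>v j))"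
    then have i: "i < n" using S by simp
    show "(S ^\<^sub>m 3 *\<^sub>v j) $ i = (complex_of_real (\<theta>^2) \<cdot>\<^sub>v (S *\<^sub>v j)) $ i"
      using dd[OF i] i S by simp
  qed (use S in simp)
  have evS: "eigenvalue S z \<longleftrightarrow> z = - t \<or> z = 0 \<or> z = t" for z
  proof -
    have d1: "d - 1 \<noteq> 0" using assms by simp
    have "poly (char_poly S) z = (t + z) ^ (d - 1) * (z * z) * (- t + z) ^ (d - 1)"
      unfolding cp by (simp add: poly_power power2_eq_square)
    also have "\<dots> = 0 \<longleftrightarrow> (t + z = 0 \<or> z = 0 \<or> - t + z = 0)"
      using d1 by simp
    also have "\<dots> \<longleftrightarrow> z = - t \<or> z = 0 \<or> z = t"
      by (auto simp: add_eq_0_iff2 algebra_simps)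
    finally show ?thesis unfolding eigenvalue_root_char_poly[OF S] .
  qed
  have setE: "{r :: real. eigenvalue S (complex_of_real r)} = {- \<theta>, 0, \<theta>}"
    unfolding evS t_def by (auto simp flip: of_real_minus)
  have sm: "smallest_eig S = - \<theta>"
    unfolding smallest_eig_def setE by (rule Min_eqI) (use th in auto)
  have ma: "main_angle S (- \<theta>) = 0" using t1 unfolding tournament_type1_def S_def[symmetric] sm .
  define w where "w = complex_of_real (1/(2*\<theta>^2)) \<cdot>\<^sub>v (S *\<^sub>v (S *\<^sub>v j) - complex_of_real \<theta> \<cdot>\<^sub>v (S *\<^sub>v j))"
  have pj: "eig_proj S (- \<theta>) j = w" unfolding w_def by (rule proj_eq[OF S saS th jc cube])
  have "vnorm w / sqrt (real n) = 0" using ma pj unfolding main_angle_def dS j_def[symmetric] by simp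
  then have "vnorm w = 0" using n0 by simp
  then have "(\<Sum>i<dim_vec w. (cmod (w $ i))\<^sup>2) = 0" unfolding vnorm_def by simp
  then have "\<forall>i\<in>{..<dim_vec w}. (cmod (w $ i))\<^sup>2 = 0" by (subst (asm) sum_nonneg_eq_0_iff) auto
  moreover have dw: "dim_vec w = n" unfolding w_def using S by simp
  ultimately have w0: "\<And>i. i < n \<Longrightarrow> w $ i = 0" by auto
  have eq: "(S *\<^sub>v (S *\<^sub>v j)) $ i = complex_of_real \<theta> * (S *\<^sub>v j) $ i" if i: "i < n" for i
  proof -
    have "complex_of_real (1/(2*\<theta>^2)) * ((S *\<^sub>v (S *\<^sub>v j)) $ i - complex_of_real \<theta> * (S *\<^sub>v j) $ i) = 0"
      using w0[OF i] i S unfolding w_def by simp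
    then show ?thesis using th by simp
  qed
  show False
    by (rule key_contra[OF tour evn n0, of \<theta>]) (use eq in \<open>simp add: S_def j_def\<close>)
qed

end
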